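(* Over a field of characteristic $0$, write $[a,b]=ab-ba$ and $\{a,b\}=ab+ba$ (so $ab=\tfrac12([a,b]+\{a,b\})$). An algebra is left-symmetric if and only if, in terms of the anticommutative operation $[\cdot,\cdot]$ and the commutative operation $\{\cdot,\cdot\}$, it satisfies \[ [[a,b],c]+[[b,c],a]+[[c,a],b]=0 \] and \[ \{\{a,b\},c\}=-\{[a,b],c\}-2\{[a,c],b\}+[\{a,b\},c]-[[a,c],b]+\{a,\{b,c\}\}-\{a,[b,c]\}+[a,\{b,c\}]. \]
   Context: A left-symmetric algebra is an algebra whose associator $(a,b,c)=(ab)c-a(bc)$ satisfies $(a,b,c)=(b,a,c)$. The statement is the polarization (in the sense of Markl–Remm) of the left-symmetric operad: the defining identities rewritten in the two operations $[\cdot,\cdot]$, $\{\cdot,\cdot\}$. *)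

theory Defs
  imports Complex_Main
begin

definition bilinear_product ::
  "('k::field \<Rightarrow> 'v::ab_group_add \<Rightarrow> 'v) \<Rightarrow> ('v \<Rightarrow> 'v \<Rightarrow> 'v) \<Rightarrow> bool" where
  "bilinear_product scale m \<longleftrightarrow>
     (\<forall>x. Vector_Spaces.linear scale scale (m x)) \<and>
     (\<forall>y. Vector_Spaces.linear scale scale (\<lambda>x. m x y))"

definition associator :: "('v \<Rightarrow> 'v \<Rightarrow> 'v) \<Rightarrow> 'v \<Rightarrow> 'v \<Rightarrow> 'v \<Rightarrow> 'v::ab_group_add" where
  "associator m a b c = m (m a b) c - m a (m b c)"

definition left_symmetric :: "('v \<Rightarrow> 'v \<Rightarrow> 'v::ab_group_add) \<Rightarrow> bool" where
  "left_symmetric m \<longleftrightarrow> (\<forall>a b c. associator m a b c = associator m b a c)"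

definition commutator :: "('v \<Rightarrow> 'v \<Rightarrow> 'v::ab_group_add) \<Rightarrow> 'v \<Rightarrow> 'v \<Rightarrow> 'v" where
  "commutator m a b = m a b - m b a"

definition anticommutator :: "('v \<Rightarrow> 'v \<Rightarrow> 'v::ab_group_add) \<Rightarrow> 'v \<Rightarrow> 'v \<Rightarrow> 'v" where
  "anticommutator m a b = m a b + m b a"

end

theory Submission
  imports Defs
begin

theorem mainTheorem12:
  fixes scale :: "'k::field_char_0 \<Rightarrow> 'v::ab_group_add \<Rightarrow> 'v"
    and m :: "'v \<Rightarrow> 'v \<Rightarrow> 'v"
  assumes "vector_space scale"
    and "bilinear_product scale m"
  defines "L \<equiv> commutator m" and "J \<equiv> anticommutator m"
  shows "left_symmetric m \<longleftrightarrow>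
    ((\<forall>a b c. L (L a b) c + L (L b c) a + L (L c a) b = 0) \<and>
     (\<forall>a b c. J (J a b) c =
        - J (L a b) c - scale 2 (J (L a c) b) + L (J a b) c - L (L a c) b
        + J a (J b c) - J a (L b c) + L a (J b c)))"
proof -
  interpret V: vector_space scale by fact
  have lin1: "\<And>x. Vector_Spaces.linear scale scale (m x)"
   and lin2: "\<And>y. Vector_Spaces.linear scale scale (\<lambda>x. m x y)"
    using assms(2) by (auto simp: bilinear_product_def)
  have addR: "m x (y + z) = m x y + m x z" for x y z
    using lin1[of x] by (simp add: Vector_Spaces.linear_def module_hom_def module_hom_axioms_def)
  have addL: "m (x + y) z = m x z + m y z" for x y z
    using lin2[of z] by (simp add: Vector_Spaces.linear_def module_hom_def module_hom_axioms_def)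
  have negR: "m x (- y) = - m x y" for x y
    using addR[of x y "-y"] addR[of x 0 0] by (metis add_left_cancel add_0_right neg_eq_iff_add_eq_0)
  have negL: "m (- x) y = - m x y" for x y
    using addL[of x "-x" y] addL[of 0 0 y] by (metis add_left_cancel add_0_right neg_eq_iff_add_eq_0)
  have diffR: "m x (y - z) = m x y - m x z" for x y z
    using addR[of x y "-z"] negR by simp
  have diffL: "m (x - y) z = m x z - m y z" for x y z
    using addL[of x "-y" z] negL by simp
  have two: "scale 2 v = v + v" for v
  proof -
    have "scale 2 v = scale (1+1) v" by simp
    also have "\<dots> = v + v" by (simp only: V.scale_left_distrib V.scale_one)
    finally show ?thesis .
  qed
  define lsa where "lsa a b c = associator m a b c - associator m b a c" for a b c
  define jac where "jac a b c = L (L a b) c + L (L b c) a + L (L c a) b" for a b c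
  define sec where "sec a b c = J (J a b) c -
        (- J (L a b) c - scale 2 (J (L a c) b) + L (J a b) c - L (L a c) b
        + J a (J b c) - J a (L b c) + L a (J b c))" for a b c
  note ex = lsa_def jac_def sec_def L_def J_def commutator_def anticommutator_def associator_def
     two addR addL diffR diffL negR negL
  have j1: "jac a b c = lsa a b c - lsa a c b + lsa b c a" for a b c
    unfolding ex by (simp add: algebra_simps)
  have s1: "sec a b c = lsa a b c + lsa a c b + lsa a c b + lsa a c b + lsa b c a" for a b c
    unfolding ex apply (simp only: ex diff_conv_add_uminus minus_add_distrib minus_minus) apply (simp only: ac_simps add_right_cancel) by simp
  have l1: "lsa a b c + lsa a b c + lsa a b c + lsa a b c = jac a b c + sec a c b" for a b c
    unfolding ex apply (simp only: ex diff_conv_add_uminus minus_add_distrib minus_minus) apply (simp only: ac_simps add_right_cancel) by simp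
  have four: "x + x + x + x = 0 \<Longrightarrow> x = 0" for x :: 'v
  proof -
    assume h: "x + x + x + x = 0"
    have "scale 4 x = scale (1+1+1+1) x" by simp
    also have "\<dots> = x + x + x + x" by (simp only: V.scale_left_distrib V.scale_one)
    finally have "scale 4 x = 0" using h by simp
    then have "scale (1/4) (scale 4 x) = 0" by (simp add: V.scale_zero_right)
    then show "x = 0" by (simp add: V.scale_scale V.scale_one)
  qed
  have lsa_iff: "left_symmetric m \<longleftrightarrow> (\<forall>a b c. lsa a b c = 0)"
    by (simp add: left_symmetric_def lsa_def)
  have jac_iff: "(\<forall>a b c. L (L a b) c + L (L b c) a + L (L c a) b = 0) \<longleftrightarrow> (\<forall>a b c. jac a b c = 0)"
    by (simp add: jac_def)
  have sec_iff: "(\<forall>a b c. J (J a b) c =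
        - J (L a b) c - scale 2 (J (L a c) b) + L (J a b) c - L (L a c) b
        + J a (J b c) - J a (L b c) + L a (J b c)) \<longleftrightarrow> (\<forall>a b c. sec a b c = 0)"
    by (simp add: sec_def)
  show ?thesis
    unfolding lsa_iff jac_iff sec_iff
  proof (intro iffI conjI allI)
    fix a b c assume "\<forall>a b c. lsa a b c = 0"
    then show "jac a b c = 0" "sec a b c = 0" by (simp_all add: j1 s1)
  next
    fix a b c assume "(\<forall>a b c. jac a b c = 0) \<and> (\<forall>a b c. sec a b c = 0)"
    then have "lsa a b c + lsa a b c + lsa a b c + lsa a b c = 0" using l1[of a b c] by simp
    then show "lsa a b c = 0" by (rule four)
  qed
qed

end
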